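(* For every half-integer $h\ge\frac12$ and each sign, the complex $\Gamma_{\pm h}$ (see context), depending on $k=\begin{pmatrix}a&b\\c&d\end{pmatrix}\in\mathbb C^{2\times2}\cong\mathbb C^4$, has no homology if $Q=ad-bc\ne0$. If $Q(q)=0$ and $q\ne0$ then its homology $\mathfrak h_q^i$ at $q$ is isomorphic to $\mathbb C$ for $i=1,2$ and is zero for $i\ne1,2$, and every such $q$ is a regular homology point (with respect to $Q$).
   Context: Let $\epsilon=\begin{pmatrix}0&1\\-1&0\end{pmatrix}$, $k^+=k$, $k^-=k^T$. $\Gamma_{\pm h}$ is the complex $S^{2h}\mathbb C^2\to S^{2h-1}\mathbb C^2\otimes\mathbb C^2\to S^{2h-2}\mathbb C^2$ in homological degrees $1,2,3$ (the last term dropped when $h=\frac12$), with first map the linear map $z^{\otimes 2h}\mapsto z^{\otimes(2h-1)}\otimes(k^{\mp}\epsilon z)$ and second map the linear map $z^{\otimes(2h-1)}\otimes y\mapsto (z^T\epsilon k^{\pm}\epsilon y)\,z^{\otimes(2h-2)}$, for $z,y\in\mathbb C^2$. A point $q$ is a regular homology point if $Q(q)=0$, $q$ is a smooth point of $Q=0$, $\dim\mathfrak h_k=\dim\mathfrak h_q$ for all $k$ with $Q(k)=0$ near $q$ (Zariski), and there is $\xi\in T_q\mathbb C^4$ with $\dot Q\ne0$ such that the differential on $\mathfrak h_q$ induced by the derivative $\dot d$ of the differential along $\xi$ at $q$ is exact. *)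

theory Defs
  imports "HOL-Analysis.Analysis" "HOL-Library.Function_Algebras"
begin

type_synonym mat2 = "complex^2^2"
type_synonym tensor = "2 list \<Rightarrow> complex"

text \<open>Tensors in (C^2)^{\<otimes>m} are modelled as functions on index lists over the two-element
  type 2, vanishing on lists of the wrong length.\<close>

definition eps :: mat2 where
  "eps = (\<chi> i j. if i = 0 \<and> j = 1 then 1 else if i = 1 \<and> j = 0 then -1 else 0)"

text \<open>sign s: True means +, False means -.  kpm s k = k^{\<plusminus>}, kmp s k = k^{\<mp>}.\<close>
definition kpm :: "bool \<Rightarrow> mat2 \<Rightarrow> mat2" where
  "kpm s k = (if s then k else transpose k)"
definition kmp :: "bool \<Rightarrow> mat2 \<Rightarrow> mat2" where
  "kmp s k = (if s then transpose k else k)"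

definition tscale :: "complex \<Rightarrow> tensor \<Rightarrow> tensor" where
  "tscale c f = (\<lambda>l. c * f l)"

abbreviation tspan :: "tensor set \<Rightarrow> tensor set" where
  "tspan \<equiv> module.span tscale"
abbreviation tdim :: "tensor set \<Rightarrow> nat" where
  "tdim \<equiv> vector_space.dim tscale"

definition pure :: "nat \<Rightarrow> complex^2 \<Rightarrow> tensor" where
  "pure m z = (\<lambda>l. if length l = m then prod_list (map (\<lambda>x. z $ x) l) else 0)"

definition pure2 :: "nat \<Rightarrow> complex^2 \<Rightarrow> complex^2 \<Rightarrow> tensor" where
  "pure2 m z y = (\<lambda>l. if length l = m
       then prod_list (map (\<lambda>x. z $ x) (butlast l)) * y $ last l else 0)"

text \<open>The terms of Gamma_{\<plusminus>h}, n = 2h, in degrees 1,2,3 (zero elsewhere; degree 3 is zero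
  when n = 1).\<close>
definition Cterm :: "nat \<Rightarrow> int \<Rightarrow> tensor set" where
  "Cterm n i =
     (if i = 1 then tspan (range (pure n))
      else if i = 2 then tspan {pure2 n z y | z y. True}
      else if i = 3 \<and> n \<ge> 2 then tspan (range (pure (n - 2)))
      else {0})"

text \<open>First map: z^{\<otimes>n} \<mapsto> z^{\<otimes>(n-1)} \<otimes> (M z), M = k^{\<mp>} eps, as a contraction
  (its restriction to S^n is the linear map of the paper).\<close>
definition d1 :: "nat \<Rightarrow> mat2 \<Rightarrow> tensor \<Rightarrow> tensor" where
  "d1 n M T = (\<lambda>l. if length l = n then (\<Sum>b\<in>UNIV. M $ last l $ b * T (butlast l @ [b])) else 0)"

text \<open>Second map: z^{\<otimes>(n-1)} \<otimes> y \<mapsto> (z^T N y) z^{\<otimes>(n-2)}, N = eps k^{\<plusminus>} eps.\<close>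
definition d2 :: "nat \<Rightarrow> mat2 \<Rightarrow> tensor \<Rightarrow> tensor" where
  "d2 n N U = (\<lambda>l. if length l = n - 2
      then (\<Sum>c\<in>UNIV. \<Sum>a\<in>UNIV. N $ c $ a * U (l @ [c, a])) else 0)"

definition dmap :: "bool \<Rightarrow> nat \<Rightarrow> mat2 \<Rightarrow> int \<Rightarrow> tensor \<Rightarrow> tensor" where
  "dmap s n k i x =
     (if i = 1 then d1 n (kmp s k ** eps) x
      else if i = 2 \<and> n \<ge> 2 then d2 n (eps ** kpm s k ** eps) x
      else 0)"

definition hdim :: "bool \<Rightarrow> nat \<Rightarrow> mat2 \<Rightarrow> int \<Rightarrow> nat" where
  "hdim s n k i = tdim {x \<in> Cterm n i. dmap s n k i x = 0}
                  - tdim (dmap s n k (i - 1) ` Cterm n (i - 1))"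

definition mline :: "mat2 \<Rightarrow> complex \<Rightarrow> mat2 \<Rightarrow> mat2" where
  "mline q t \<xi> = (\<chi> a b. q $ a $ b + t * \<xi> $ a $ b)"

definition ddot :: "bool \<Rightarrow> nat \<Rightarrow> mat2 \<Rightarrow> mat2 \<Rightarrow> int \<Rightarrow> tensor \<Rightarrow> tensor" where
  "ddot s n q \<xi> i x = (\<lambda>l. deriv (\<lambda>t. dmap s n (mline q t \<xi>) i x l) 0)"

definition Qdot_nonzero :: "mat2 \<Rightarrow> mat2 \<Rightarrow> bool" where
  "Qdot_nonzero q \<xi> \<longleftrightarrow>
     (\<exists>D. ((\<lambda>t. det (mline q t \<xi>)) has_field_derivative D) (at 0) \<and> D \<noteq> 0)"

definition smooth_point :: "mat2 \<Rightarrow> bool" where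
  "smooth_point q \<longleftrightarrow> det q = 0 \<and> (\<exists>\<xi>. Qdot_nonzero q \<xi>)"

inductive_set polyfun :: "(mat2 \<Rightarrow> complex) set" where
  pf_const: "(\<lambda>k. c) \<in> polyfun"
| pf_coord: "(\<lambda>k. k $ i $ j) \<in> polyfun"
| pf_add: "p \<in> polyfun \<Longrightarrow> r \<in> polyfun \<Longrightarrow> (\<lambda>k. p k + r k) \<in> polyfun"
| pf_mult: "p \<in> polyfun \<Longrightarrow> r \<in> polyfun \<Longrightarrow> (\<lambda>k. p k * r k) \<in> polyfun"

definition zariski_open :: "mat2 set \<Rightarrow> bool" where
  "zariski_open U \<longleftrightarrow> (\<exists>P \<subseteq> polyfun. U = - {k. \<forall>p\<in>P. p k = 0})"

text \<open>the differential on h_q induced by \<dot>d is exact: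
  [x] \<in> h^i with [\<dot>d x] = 0 in h^{i+1} implies [x] = [\<dot>d y] for a cycle y\<close>
definition induced_exact :: "bool \<Rightarrow> nat \<Rightarrow> mat2 \<Rightarrow> mat2 \<Rightarrow> bool" where
  "induced_exact s n q \<xi> \<longleftrightarrow>
     (\<forall>i. \<forall>x \<in> Cterm n i.
        dmap s n q i x = 0 \<and> ddot s n q \<xi> i x \<in> dmap s n q i ` Cterm n i \<longrightarrow>
        (\<exists>y \<in> Cterm n (i - 1). \<exists>w \<in> Cterm n (i - 1).
           dmap s n q (i - 1) y = 0 \<and>
           x = (\<lambda>l. ddot s n q \<xi> (i - 1) y l + dmap s n q (i - 1) w l)))"

definition regular_homology_point :: "bool \<Rightarrow> nat \<Rightarrow> mat2 \<Rightarrow> bool" where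
  "regular_homology_point s n q \<longleftrightarrow>
     det q = 0 \<and> smooth_point q \<and>
     (\<exists>U. zariski_open U \<and> q \<in> U \<and>
        (\<forall>k \<in> U. det k = 0 \<longrightarrow> (\<forall>i. hdim s n k i = hdim s n q i))) \<and>
     (\<exists>\<xi>. Qdot_nonzero q \<xi> \<and> induced_exact s n q \<xi>)"

end

theory Submission imports Defs begin

lemma pow2_eq: "((2::'a::field)*t) ^ i - 2 ^ Suc m * t ^ i = t ^ i * (2 ^ i - 2 ^ Suc m)"
  by (simp add: power_mult_distrib algebra_simps)

context vector_space
begin

lemma fd_basis:
  assumes "finite B0" "V \<subseteq> span B0"
  obtains B where "B \<subseteq> V" "independent B" "V \<subseteq> span B" "card B = dim V" "finite B"
proof -
  obtain B where B: "B \<subseteq> V" "independent B" "V \<subseteq> span B" "card B = dim V"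
    using basis_exists by blast
  have "finite B" using independent_span_bound[OF assms(1) B(2)] B(1) assms(2) by blast
  then show ?thesis using B that by blast
qed

lemma span_inter_indep:
  assumes "independent B" "finite B" "C \<subseteq> B" "x \<in> span C" "x \<in> span (B - C)"
  shows "x = 0"
proof -
  have fC: "finite C" "finite (B - C)" using assms finite_subset by auto
  obtain u where u: "x = (\<Sum>v\<in>C. u v *s v)" using assms(4) span_finite[OF fC(1)] by auto
  obtain w where w: "x = (\<Sum>v\<in>B - C. w v *s v)" using assms(5) span_finite[OF fC(2)] by auto
  define c where "c v = (if v \<in> C then u v else - w v)" for v
  have "(\<Sum>v\<in>B. c v *s v) = (\<Sum>v\<in>C. c v *s v) + (\<Sum>v\<in>B - C. c v *s v)"
    using sum.subset_diff[OF assms(3) assms(2)] by (simp add: add.commute)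
  also have "(\<Sum>v\<in>C. c v *s v) = x" unfolding u by (rule sum.cong) (auto simp: c_def)
  also have "(\<Sum>v\<in>B - C. c v *s v) = - x" unfolding w
    by (simp add: c_def sum_negf[symmetric])
  finally have z: "(\<Sum>v\<in>B. c v *s v) = 0" by simp
  have "\<forall>v\<in>C. u v = 0"
  proof
    fix v assume "v \<in> C"
    then have "c v = 0" using independentD[OF assms(1) assms(2) subset_refl z] assms(3) by auto
    then show "u v = 0" using \<open>v \<in> C\<close> by (simp add: c_def)
  qed
  then show ?thesis unfolding u by simp
qed

lemma rank_nullity_sub:
  assumes lf: "Vector_Spaces.linear scale scale f" and S: "subspace S"
    and fin: "finite B0" "S \<subseteq> span B0"
  shows "dim {x\<in>S. f x = 0} + dim (f ` S) = dim S"
proof -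
  interpret L: Vector_Spaces.linear scale scale f by (rule lf)
  define K where "K = {x\<in>S. f x = 0}"
  have KS: "K \<subseteq> S" by (auto simp: K_def)
  obtain BK where BK: "BK \<subseteq> K" "independent BK" "K \<subseteq> span BK" "card BK = dim K"
    using basis_exists by blast
  obtain B where B: "BK \<subseteq> B" "B \<subseteq> S" "independent B" "S \<subseteq> span B"
    using maximal_independent_subset_extend[of BK S] BK KS by blast
  have fB: "finite B" using independent_span_bound[OF fin(1) B(3)] B(2) fin(2) by blast
  have dS: "card B = dim S" using basis_card_eq_dim[OF B(2) B(4) B(3)] .
  define C where "C = B - BK"
  have spanC: "span C \<subseteq> S" using B(2) S span_minimal[of C S] by (auto simp: C_def)
  have injC: "inj_on f (span C)"
    unfolding L.inj_on_iff_eq_0[OF subspace_span]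
  proof (intro ballI impI)
    fix x assume x: "x \<in> span C" "f x = 0"
    then have "x \<in> K" using spanC by (auto simp: K_def)
    then have "x \<in> span BK" using BK(3) by auto
    moreover have "B - BK = C" by (simp add: C_def)
    moreover have "x \<in> span (B - (B - BK))" using \<open>x \<in> span BK\<close> B(1)
      by (simp add: Diff_Diff_Int Int_absorb1)
    ultimately show "x = 0" using span_inter_indep[OF B(3) fB, of "B - BK" x] x(1) by auto
  qed
  have indC: "independent (f ` C)"
    using L.independent_injective_image[OF _ injC] B(3) independent_mono[of B C] by (auto simp: C_def)
  have cardC: "card (f ` C) = card C"
    using card_image inj_on_subset[OF injC span_superset] by blast
  have "span (f ` C) = span (f ` S)"
  proof (rule subset_antisym)
    show "span (f ` C) \<subseteq> span (f ` S)" using B(2) by (intro span_mono) (auto simp: C_def)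
    have "f ` B \<subseteq> span (f ` C)"
    proof
      fix y assume "y \<in> f ` B"
      then obtain b where b: "b \<in> B" "y = f b" by auto
      show "y \<in> span (f ` C)"
      proof (cases "b \<in> BK")
        case True then have "f b = 0" using BK(1) by (auto simp: K_def)
        then show ?thesis using b by (simp add: span_zero)
      next
        case False then show ?thesis using b by (auto simp: C_def intro: span_base)
      qed
    qed
    then have "span (f ` B) \<subseteq> span (f ` C)" by (simp add: span_minimal)
    moreover have "f ` S \<subseteq> span (f ` B)" using B(4) L.span_image by blast
    ultimately have "f ` S \<subseteq> span (f ` C)" by blast
    then show "span (f ` S) \<subseteq> span (f ` C)" by (rule span_minimal[OF _ subspace_span])
  qed
  then have "dim (f ` S) = card (f ` C)" using dim_eq_card[OF _ indC] by simp
  moreover have "card B = card BK + card C"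
    using card_Diff_subset[OF finite_subset[OF B(1) fB] B(1)] card_mono[OF fB B(1)]
    by (simp add: C_def)
  ultimately show ?thesis using dS BK(4) cardC K_def by simp
qed

lemma dim_insert_fd:
  assumes "finite B0" "A \<subseteq> span B0" "g \<notin> span A"
  shows "dim (insert g A) = dim A + 1"
proof -
  obtain B where B: "B \<subseteq> A" "independent B" "A \<subseteq> span B" "card B = dim A" "finite B"
    using fd_basis[OF assms(1,2)] by blast
  have sB: "span B = span A" using B span_mono span_minimal[OF B(3) subspace_span]
    by (metis span_span subset_antisym)
  have gB: "g \<notin> span B" using sB assms(3) by simp
  have "span (insert g B) = span (insert g A)"
    using sB by (metis span_insert)
  moreover have "independent (insert g B)" using independent_insertI[OF gB B(2)] .
  ultimately have "dim (insert g A) = card (insert g B)" using dim_eq_card by metis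
  moreover have "g \<notin> B" using gB span_base by blast
  ultimately show ?thesis using B(4,5) by simp
qed

lemma subspace_dim_eq_sub:
  assumes "finite B0" "T \<subseteq> span B0" "subspace A" "subspace T" "A \<subseteq> T" "dim A = dim T"
  shows "T \<subseteq> A"
proof -
  obtain BA where BA: "BA \<subseteq> A" "independent BA" "A \<subseteq> span BA" "card BA = dim A"
    using basis_exists by blast
  obtain BT where BT: "BA \<subseteq> BT" "BT \<subseteq> T" "independent BT" "T \<subseteq> span BT"
    using maximal_independent_subset_extend[of BA T] BA assms(5) by blast
  have fT: "finite BT" using independent_span_bound[OF assms(1) BT(3)] BT(2) assms(2) by blast
  have "card BT = dim T" using basis_card_eq_dim[OF BT(2) BT(4) BT(3)] .
  then have "BA = BT" using card_subset_eq[OF fT BT(1)] BA(4) assms(6) by simp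
  then show ?thesis using BT(4) BA(1) span_minimal[OF BA(1) assms(3)] by blast
qed



end

lemma tscale_vs: "vector_space tscale"
  by unfold_locales (auto simp: tscale_def fun_eq_iff algebra_simps)

interpretation TV: vector_space tscale by (rule tscale_vs)

lemma poly_span:
  assumes S: "TV.subspace S"
  shows "(\<forall>t. (\<Sum>i\<le>m. tscale (t ^ i) (w i)) \<in> S) \<Longrightarrow> i \<le> m \<Longrightarrow> w i \<in> S"
proof (induction m arbitrary: w i)
  case 0
  then show ?case using spec[OF "0.prems"(1), of 1] by simp
next
  case (Suc m)
  define w' where "w' i = tscale (2 ^ i - 2 ^ Suc m) (w i)" for i
  have P: "\<And>t. (\<Sum>i\<le>Suc m. tscale (t ^ i) (w i)) \<in> S" using Suc.prems by blast
  have "\<forall>t. (\<Sum>i\<le>m. tscale (t ^ i) (w' i)) \<in> S"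
  proof
    fix t
    have A: "(\<Sum>i\<le>Suc m. tscale ((2*t) ^ i) (w i)) \<in> S" by (rule P)
    have B: "tscale (2 ^ Suc m) (\<Sum>i\<le>Suc m. tscale (t ^ i) (w i)) \<in> S" by (rule TV.subspace_scale[OF S P])
    have "(\<Sum>i\<le>Suc m. tscale ((2*t) ^ i) (w i)) - tscale (2 ^ Suc m) (\<Sum>i\<le>Suc m. tscale (t ^ i) (w i)) \<in> S"
      by (rule TV.subspace_diff[OF S A B])
    also have "(\<Sum>i\<le>Suc m. tscale ((2*t) ^ i) (w i)) - tscale (2 ^ Suc m) (\<Sum>i\<le>Suc m. tscale (t ^ i) (w i))
      = (\<Sum>i\<le>Suc m. tscale ((2*t) ^ i - 2 ^ Suc m * t ^ i) (w i))"
    proof -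
      have "tscale (2 ^ Suc m) (\<Sum>i\<le>Suc m. tscale (t ^ i) (w i)) = (\<Sum>i\<le>Suc m. tscale (2 ^ Suc m * t ^ i) (w i))"
        by (simp only: TV.scale_sum_right TV.scale_scale)
      then show ?thesis by (simp only: TV.scale_left_diff_distrib sum_subtractf)
    qed
    also have "\<dots> = (\<Sum>i\<le>m. tscale ((2*t) ^ i - 2 ^ Suc m * t ^ i) (w i))"
      by (simp only: sum.atMost_Suc power_mult_distrib diff_self TV.scale_zero_left add_0_right)
    also have "\<dots> = (\<Sum>i\<le>m. tscale (t ^ i) (w' i))"
    proof (rule sum.cong[OF refl])
      fix i
      have eq: "(2*t) ^ i - 2 ^ Suc m * t ^ i = t ^ i * (2 ^ i - 2 ^ Suc m)"
        by (rule pow2_eq)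
      show "tscale ((2*t) ^ i - 2 ^ Suc m * t ^ i) (w i) = tscale (t ^ i) (w' i)"
        unfolding w'_def TV.scale_scale eq by (rule refl)
    qed
    finally show "(\<Sum>i\<le>m. tscale (t ^ i) (w' i)) \<in> S" .
  qed
  then have IH: "\<And>i. i \<le> m \<Longrightarrow> w' i \<in> S" using Suc.IH by blast
  have low: "w i \<in> S" if "i \<le> m" for i
  proof -
    have "(2::complex) ^ i \<noteq> 2 ^ Suc m"
    proof
      assume "(2::complex) ^ i = 2 ^ Suc m"
      then have "of_nat (2 ^ i) = (of_nat (2 ^ Suc m) :: complex)" by simp
      then have "(2::nat) ^ i = 2 ^ Suc m" using of_nat_eq_iff by blast
      then show False using that power_increasing[of i m "2::nat"] by simp
    qed
    then have "w i = tscale (inverse (2 ^ i - 2 ^ Suc m)) (w' i)" by (simp add: w'_def TV.scale_scale)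
    then show ?thesis using IH[OF that] S TV.subspace_scale by metis
  qed
  show ?case
  proof (cases "i \<le> m")
    case True then show ?thesis using low by blast
  next
    case False
    then have i: "i = Suc m" using Suc.prems(2) by simp
    have "w (Suc m) = (\<Sum>i\<le>Suc m. tscale (1 ^ i) (w i)) - (\<Sum>i\<le>m. w i)" by (simp add: TV.scale_one)
    also have "\<dots> \<in> S"
    proof -
      have L: "(\<Sum>i\<le>m. w i) \<in> S" using low by (intro TV.subspace_sum[OF S]) auto
      show ?thesis by (rule TV.subspace_diff[OF S P[of 1] L])
    qed
    finally show ?thesis using i by simp
  qed
qed


section \<open>Concrete tensors\<close>

lemma UNIV2: "(UNIV::2 set) = {0,1}"
  using exhaust_2 by (metis UNIV_2 insert_commute zero_neq_one one_add_one add_cancel_right_left)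

lemma two_cases: "(x::2) = 0 \<or> x = 1"
  using UNIV2 by auto

lemma sum_UNIV2: "sum f (UNIV::2 set) = f 0 + f 1"
  by (simp add: UNIV2)

lemma sum_fun_apply: "(\<Sum>x\<in>A. f x) l = (\<Sum>x\<in>A. f x l)"
  by (induct A rule: infinite_finite_induct) (auto simp: plus_fun_def)

lemma tsum_apply: "(\<Sum>x\<in>A. tscale (c x) (f x)) l = (\<Sum>x\<in>A. c x * f x l)"
  by (simp add: sum_fun_apply tscale_def)

definition cnt :: "2 list \<Rightarrow> nat" where "cnt l = length (filter (\<lambda>x. x = 1) l)"
definition ind :: "2 \<Rightarrow> nat" where "ind b = (if b = 1 then 1 else 0)"
definition E :: "nat \<Rightarrow> (nat \<Rightarrow> complex) \<Rightarrow> tensor" where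
  "E m t = (\<lambda>l. if length l = m then t (cnt l) else 0)"
definition F :: "nat \<Rightarrow> (nat \<Rightarrow> 2 \<Rightarrow> complex) \<Rightarrow> tensor" where
  "F m u = (\<lambda>l. if length l = m then u (cnt (butlast l)) (last l) else 0)"
definition wl :: "nat \<Rightarrow> nat \<Rightarrow> 2 list" where "wl m j = replicate j 1 @ replicate (m - j) 0"
definition dl :: "nat \<Rightarrow> nat \<Rightarrow> complex" where "dl j = (\<lambda>i. if i = j then 1 else 0)"
definition dl2 :: "nat \<Rightarrow> 2 \<Rightarrow> nat \<Rightarrow> 2 \<Rightarrow> complex" where
  "dl2 j c = (\<lambda>i d. if i = j \<and> d = c then 1 else 0)"

lemma ind_simps[simp]: "ind 0 = 0" "ind 1 = 1" by (auto simp: ind_def)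

lemma cnt_simps[simp]: "cnt [] = 0" "cnt (xs @ ys) = cnt xs + cnt ys" "cnt (x # xs) = ind x + cnt xs"
  by (auto simp: cnt_def ind_def)

lemma cnt_le: "cnt l \<le> length l"
  by (simp add: cnt_def)

lemma cnt_replicate[simp]: "cnt (replicate j 1) = j" "cnt (replicate j 0) = 0"
  by (induct j) auto

lemma wl_props: "j \<le> m \<Longrightarrow> length (wl m j) = m" "cnt (wl m j) = j"
  by (auto simp: wl_def)

lemma prod_list_pow: "prod_list (map (\<lambda>x. (z::complex^2) $ x) l) = z $ 1 ^ cnt l * z $ 0 ^ (length l - cnt l)"
proof (induct l)
  case Nil then show ?case by simp
next
  case (Cons a l)
  have le: "cnt l \<le> length l" by (rule cnt_le)
  show ?case
  proof (cases "a = 1")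
    case True then show ?thesis using Cons by (simp add: mult.assoc)
  next
    case False then have "a = 0" using two_cases by blast
    then show ?thesis using Cons le by (simp add: Suc_diff_le ac_simps)
  qed
qed

lemma pure_E: "pure m z = E m (\<lambda>j. z $ 1 ^ j * z $ 0 ^ (m - j))"
  by (auto simp: pure_def E_def fun_eq_iff prod_list_pow)

lemma pure2_F: "1 \<le> n \<Longrightarrow> pure2 n z y = F n (\<lambda>j c. z $ 1 ^ j * z $ 0 ^ (n - 1 - j) * y $ c)"
  by (auto simp: pure2_def F_def fun_eq_iff prod_list_pow)

lemma E_eq_iff: "E m t = E m t' \<longleftrightarrow> (\<forall>j\<le>m. t j = t' j)"
proof
  assume "E m t = E m t'"
  then have "\<And>j. j \<le> m \<Longrightarrow> E m t (wl m j) = E m t' (wl m j)" by simp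
  then show "\<forall>j\<le>m. t j = t' j" by (auto simp: E_def wl_props)
next
  assume "\<forall>j\<le>m. t j = t' j"
  then show "E m t = E m t'" using cnt_le by (auto simp: E_def fun_eq_iff)
qed

lemma F_eq_iff: "1 \<le> n \<Longrightarrow> F n u = F n u' \<longleftrightarrow> (\<forall>j\<le>n-1. \<forall>c. u j c = u' j c)"
proof
  assume n: "1 \<le> n" and "F n u = F n u'"
  then have "\<And>j c. j \<le> n - 1 \<Longrightarrow> F n u (wl (n-1) j @ [c]) = F n u' (wl (n-1) j @ [c])" by simp
  then show "\<forall>j\<le>n-1. \<forall>c. u j c = u' j c" using n by (auto simp: F_def wl_props)
next
  assume "\<forall>j\<le>n-1. \<forall>c. u j c = u' j c"
  then show "F n u = F n u'" using cnt_le[of "butlast _"] by (auto simp: F_def fun_eq_iff)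
qed

lemma E_add: "E m t + E m t' = E m (\<lambda>j. t j + t' j)"
  by (auto simp: E_def fun_eq_iff)
lemma E_scale: "tscale c (E m t) = E m (\<lambda>j. c * t j)"
  by (auto simp: E_def fun_eq_iff tscale_def)
lemma E_zero: "0 = E m (\<lambda>j. 0)"
  by (auto simp: E_def fun_eq_iff)
lemma F_add: "F m u + F m u' = F m (\<lambda>j c. u j c + u' j c)"
  by (auto simp: F_def fun_eq_iff)
lemma F_scale: "tscale a (F m u) = F m (\<lambda>j c. a * u j c)"
  by (auto simp: F_def fun_eq_iff tscale_def)
lemma F_zero: "0 = F m (\<lambda>j c. 0)"
  by (auto simp: F_def fun_eq_iff)

lemma subspace_E: "TV.subspace (range (E m))"
  unfolding TV.subspace_def
proof (intro conjI ballI allI)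
  show "0 \<in> range (E m)" by (subst E_zero[of m]) (rule rangeI)
  show "x + y \<in> range (E m)" if "x \<in> range (E m)" "y \<in> range (E m)" for x y
    using that by (auto simp: E_add)
  show "tscale c x \<in> range (E m)" if "x \<in> range (E m)" for c x
    using that by (auto simp: E_scale)
qed

lemma subspace_F: "TV.subspace (range (F m))"
  unfolding TV.subspace_def
proof (intro conjI ballI allI)
  show "0 \<in> range (F m)" by (subst F_zero[of m]) (rule rangeI)
  show "x + y \<in> range (F m)" if "x \<in> range (F m)" "y \<in> range (F m)" for x y
    using that by (auto simp: F_add)
  show "tscale c x \<in> range (F m)" if "x \<in> range (F m)" for c x
    using that by (auto simp: F_scale)
qed

lemma sum_delta_le: "(a::nat) \<le> m \<Longrightarrow> (\<Sum>j\<le>m. f j * (if a = j then 1 else 0)) = (f a :: complex)"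
proof -
  assume a: "a \<le> m"
  have eq: "(\<lambda>j. f j * (if a = j then 1 else 0)) = (\<lambda>j. if a = j then f j else 0)" by auto
  show ?thesis unfolding eq using a by simp
qed

lemma E_sum: "E m t = (\<Sum>j\<le>m. tscale (t j) (E m (dl j)))"
proof
  fix l
  show "E m t l = (\<Sum>j\<le>m. tscale (t j) (E m (dl j))) l"
  proof (cases "length l = m")
    case True
    then have "cnt l \<le> m" using cnt_le by metis
    then show ?thesis using True by (simp add: tsum_apply E_def dl_def sum_delta_le)
  qed (simp add: tsum_apply E_def)
qed

lemma F_sum1: "1 \<le> n \<Longrightarrow> F n (\<lambda>j d. t j * (if d = c then 1 else 0)) = (\<Sum>j\<le>n-1. tscale (t j) (F n (dl2 j c)))"
proof
  fix l assume n: "1 \<le> n"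
  show "F n (\<lambda>j d. t j * (if d = c then 1 else 0)) l = (\<Sum>j\<le>n-1. tscale (t j) (F n (dl2 j c))) l"
  proof (cases "length l = n")
    case True
    then have "cnt (butlast l) \<le> n - 1" using cnt_le[of "butlast l"] by simp
    then show ?thesis using True by (cases "last l = c") (simp_all add: tsum_apply F_def dl2_def sum_delta_le)
  qed (simp add: tsum_apply F_def)
qed

lemma F_sum: "1 \<le> n \<Longrightarrow> F n u = (\<Sum>j\<le>n-1. \<Sum>c\<in>UNIV. tscale (u j c) (F n (dl2 j c)))"
proof
  fix l assume n: "1 \<le> n"
  show "F n u l = (\<Sum>j\<le>n-1. \<Sum>c\<in>UNIV. tscale (u j c) (F n (dl2 j c))) l"
  proof (cases "length l = n")
    case True
    then have "cnt (butlast l) \<le> n - 1" using cnt_le[of "butlast l"] by simp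
    then show ?thesis using True two_cases[of "last l"]
      by (auto simp: sum_fun_apply tscale_def F_def dl2_def sum_UNIV2 sum_delta_le)
  qed (simp add: sum_fun_apply tscale_def F_def)
qed


lemma span_pure: "tspan (range (pure m)) = range (E m)"
proof
  show "tspan (range (pure m)) \<subseteq> range (E m)"
    by (rule TV.span_minimal[OF _ subspace_E]) (auto simp: pure_E)
  show "range (E m) \<subseteq> tspan (range (pure m))"
  proof
    fix x assume "x \<in> range (E m)" then obtain t where x: "x = E m t" by auto
    have dl_in: "E m (dl j) \<in> tspan (range (pure m))" if "j \<le> m" for j
    proof (rule poly_span[OF TV.subspace_span _ that])
      show "\<forall>c. (\<Sum>i\<le>m. tscale (c ^ i) (E m (dl i))) \<in> tspan (range (pure m))"
      proof
        fix c :: complex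
        have "(\<Sum>i\<le>m. tscale (c ^ i) (E m (dl i))) = E m (\<lambda>i. c ^ i)" by (rule E_sum[symmetric])
        also have "\<dots> = pure m (\<chi> i. if i = 1 then c else 1)" by (simp add: pure_E)
        finally show "(\<Sum>i\<le>m. tscale (c ^ i) (E m (dl i))) \<in> tspan (range (pure m))"
          by (simp add: TV.span_base)
      qed
    qed
    show "x \<in> tspan (range (pure m))" unfolding x E_sum[of m t]
      by (intro TV.span_sum TV.span_scale dl_in) auto
  qed
qed

lemma span_pure2: assumes n: "1 \<le> n" shows "tspan {pure2 n z y | z y. True} = range (F n)"
proof
  show "tspan {pure2 n z y | z y. True} \<subseteq> range (F n)"
    by (rule TV.span_minimal[OF _ subspace_F]) (auto simp: pure2_F[OF n])
  show "range (F n) \<subseteq> tspan {pure2 n z y | z y. True}"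
  proof
    fix x assume "x \<in> range (F n)" then obtain u where x: "x = F n u" by auto
    have dl_in: "F n (dl2 j c) \<in> tspan {pure2 n z y | z y. True}" if "j \<le> n - 1" for j c
    proof (rule poly_span[OF TV.subspace_span _ that])
      show "\<forall>a. (\<Sum>i\<le>n-1. tscale (a ^ i) (F n (dl2 i c))) \<in> tspan {pure2 n z y | z y. True}"
      proof
        fix a :: complex
        have "(\<Sum>i\<le>n-1. tscale (a ^ i) (F n (dl2 i c))) = F n (\<lambda>j d. a ^ j * (if d = c then 1 else 0))"
          by (rule F_sum1[OF n, symmetric])
        also have "\<dots> = pure2 n (\<chi> i. if i = 1 then a else 1) (\<chi> i. if i = c then 1 else 0)"
          by (simp add: pure2_F[OF n])
        finally show "(\<Sum>i\<le>n-1. tscale (a ^ i) (F n (dl2 i c))) \<in> tspan {pure2 n z y | z y. True}"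
          by (auto intro: TV.span_base)
      qed
    qed
    show "x \<in> tspan {pure2 n z y | z y. True}" unfolding x F_sum[OF n, of u]
      by (intro TV.span_sum TV.span_scale dl_in) auto
  qed
qed

lemma Cterm1: "Cterm n 1 = range (E n)"
  by (simp add: Cterm_def span_pure)
lemma Cterm2: "1 \<le> n \<Longrightarrow> Cterm n 2 = range (F n)"
  using span_pure2[of n] by (simp add: Cterm_def)
lemma Cterm3: "2 \<le> n \<Longrightarrow> Cterm n 3 = range (E (n - 2))"
  by (simp add: Cterm_def span_pure)
lemma Cterm_other: "i \<noteq> 1 \<Longrightarrow> i \<noteq> 2 \<Longrightarrow> \<not> (i = 3 \<and> 2 \<le> n) \<Longrightarrow> Cterm n i = {0}"
  by (auto simp: Cterm_def)

lemma indep_wit: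
  assumes fin: "finite I" and w: "\<And>i j. i \<in> I \<Longrightarrow> j \<in> I \<Longrightarrow> g i (wit j) = (if i = j then 1 else 0)"
  shows "TV.independent (g ` I)" "card (g ` I) = card I"
proof -
  have inj: "inj_on g I"
  proof (rule inj_onI)
    fix i j assume ij: "i \<in> I" "j \<in> I" "g i = g j"
    then have "g i (wit j) = g j (wit j)" by simp
    also have "g j (wit j) = 1" using w ij by simp
    finally show "i = j" using w[OF ij(1,2)] by (simp split: if_splits)
  qed
  then show "card (g ` I) = card I" by (rule card_image)
  show "TV.independent (g ` I)"
  proof (rule TV.independent_if_scalars_zero[OF finite_imageI[OF fin]])
    fix f x assume z: "(\<Sum>x\<in>g ` I. tscale (f x) x) = 0" and x: "x \<in> g ` I"
    then obtain j where j: "j \<in> I" "x = g j" by auto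
    have "0 = (\<Sum>x\<in>g ` I. tscale (f x) x) (wit j)" using z by simp
    also have "\<dots> = (\<Sum>i\<in>I. f (g i) * g i (wit j))"
      by (simp add: tsum_apply sum.reindex[OF inj])
    also have "\<dots> = (\<Sum>i\<in>I. if i = j then f (g j) else 0)"
      by (rule sum.cong) (auto simp: w j)
    also have "\<dots> = f (g j)" using j fin by simp
    finally show "f x = 0" using j by simp
  qed
qed

lemma E_basis: "range (E m) = tspan ((\<lambda>j. E m (dl j)) ` {..m})"
proof
  show "range (E m) \<subseteq> tspan ((\<lambda>j. E m (dl j)) ` {..m})"
  proof
    fix x assume "x \<in> range (E m)" then obtain t where x: "x = E m t" by auto
    show "x \<in> tspan ((\<lambda>j. E m (dl j)) ` {..m})" unfolding x E_sum[of m t]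
      by (intro TV.span_sum TV.span_scale) (auto intro: TV.span_base)
  qed
  show "tspan ((\<lambda>j. E m (dl j)) ` {..m}) \<subseteq> range (E m)"
    by (rule TV.span_minimal[OF _ subspace_E]) auto
qed

lemma F_basis: "1 \<le> n \<Longrightarrow> range (F n) = tspan ((\<lambda>(j,c). F n (dl2 j c)) ` ({..n-1} \<times> UNIV))"
proof
  assume n: "1 \<le> n"
  show "range (F n) \<subseteq> tspan ((\<lambda>(j,c). F n (dl2 j c)) ` ({..n-1} \<times> UNIV))"
  proof
    fix x assume "x \<in> range (F n)" then obtain u where x: "x = F n u" by auto
    show "x \<in> tspan ((\<lambda>(j,c). F n (dl2 j c)) ` ({..n-1} \<times> UNIV))" unfolding x F_sum[OF n, of u]
      by (intro TV.span_sum TV.span_scale) (auto intro!: TV.span_base)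
  qed
  show "tspan ((\<lambda>(j,c). F n (dl2 j c)) ` ({..n-1} \<times> UNIV)) \<subseteq> range (F n)"
    by (rule TV.span_minimal[OF _ subspace_F]) auto
qed

lemma dim_E: "tdim (range (E m)) = m + 1"
proof -
  have "TV.independent ((\<lambda>j. E m (dl j)) ` {..m})" "card ((\<lambda>j. E m (dl j)) ` {..m}) = card {..m}"
    by (rule indep_wit[where wit = "wl m"]; simp add: E_def dl_def wl_props)+
  then show ?thesis unfolding E_basis TV.dim_span by (simp add: TV.dim_eq_card_independent)
qed

lemma dim_F: assumes n: "1 \<le> n" shows "tdim (range (F n)) = 2 * n"
proof -
  let ?g = "\<lambda>(j,c). F n (dl2 j c)" and ?I = "{..n-1} \<times> (UNIV :: 2 set)"
  have w: "?g i ((\<lambda>(j,c). wl (n-1) j @ [c]) k) = (if i = k then 1 else 0)" if "i \<in> ?I" "k \<in> ?I" for i k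
    using that n by (auto simp: F_def dl2_def wl_props split: prod.splits)
  have "TV.independent (?g ` ?I)" "card (?g ` ?I) = card ?I"
    by (rule indep_wit[OF _ w]; simp)+
  moreover have "card ?I = 2 * n" using n by (simp add: card_cartesian_product)
  ultimately show ?thesis unfolding F_basis[OF n] TV.dim_span by (simp add: TV.dim_eq_card_independent)
qed


section \<open>Maps\<close>

lemma two0: "(2::2) = 0" by simp

lemma det2: "det (A::mat2) = A$0$0 * A$1$1 - A$0$1 * A$1$0"
  by (simp add: det_2 two0 algebra_simps)

lemma lin_d1: "Vector_Spaces.linear tscale tscale (d1 n M)"
  unfolding Vector_Spaces.linear_iff
  by (auto simp: tscale_vs d1_def fun_eq_iff tscale_def sum.distrib algebra_simps sum_distrib_left)

lemma lin_d2: "Vector_Spaces.linear tscale tscale (d2 n M)"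
  unfolding Vector_Spaces.linear_iff
  by (auto simp: tscale_vs d2_def fun_eq_iff tscale_def sum.distrib algebra_simps sum_distrib_left)

lemma lin_zero: "Vector_Spaces.linear tscale tscale (0 :: tensor \<Rightarrow> tensor)"
  unfolding Vector_Spaces.linear_iff
  by (auto simp: tscale_vs fun_eq_iff tscale_def)

lemma lin_dmap: "Vector_Spaces.linear tscale tscale (dmap s n k i)"
proof -
  have "dmap s n k i = (if i = 1 then d1 n (kmp s k ** eps) else if i = 2 \<and> n \<ge> 2 then d2 n (eps ** kpm s k ** eps) else 0)"
    by (auto simp: dmap_def fun_eq_iff)
  then show ?thesis using lin_d1 lin_d2 lin_zero by simp
qed

lemma kmp_kpm: "kmp s k = transpose (kpm s k)"
  by (simp add: kmp_def kpm_def transpose_transpose)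

lemma M_entries: "(kmp s k ** eps)$x$0 = - (kpm s k)$1$x" "(kmp s k ** eps)$x$1 = (kpm s k)$0$x"
  by (simp_all add: kmp_kpm matrix_matrix_mult_def transpose_def eps_def sum_UNIV2)

lemma N_entries: "(eps ** kpm s k ** eps)$0$0 = - (kpm s k)$1$1" "(eps ** kpm s k ** eps)$0$1 = (kpm s k)$1$0"
  "(eps ** kpm s k ** eps)$1$0 = (kpm s k)$0$1" "(eps ** kpm s k ** eps)$1$1 = - (kpm s k)$0$0"
  by (simp_all add: matrix_matrix_mult_def eps_def sum_UNIV2)

definition D1 :: "mat2 \<Rightarrow> (nat \<Rightarrow> complex) \<Rightarrow> nat \<Rightarrow> 2 \<Rightarrow> complex" where
  "D1 K t w x = K$0$x * t (Suc w) - K$1$x * t w"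
definition D2 :: "mat2 \<Rightarrow> (nat \<Rightarrow> 2 \<Rightarrow> complex) \<Rightarrow> nat \<Rightarrow> complex" where
  "D2 K u v = K$1$0 * u v 1 - K$1$1 * u v 0 + K$0$1 * u (Suc v) 0 - K$0$0 * u (Suc v) 1"

lemma d1_E: "1 \<le> n \<Longrightarrow> d1 n M (E n t) = F n (\<lambda>w x. M$x$0 * t w + M$x$1 * t (Suc w))"
  by (auto simp: d1_def E_def F_def fun_eq_iff sum_UNIV2)

lemma d2_F: "2 \<le> n \<Longrightarrow> d2 n N (F n u) =
   E (n-2) (\<lambda>v. N$0$0 * u v 0 + N$0$1 * u v 1 + N$1$0 * u (Suc v) 0 + N$1$1 * u (Suc v) 1)"
  by (auto simp: d2_def E_def F_def fun_eq_iff sum_UNIV2 butlast_append)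

lemma dmap1_E: "1 \<le> n \<Longrightarrow> dmap s n k 1 (E n t) = F n (D1 (kpm s k) t)"
  by (simp add: dmap_def d1_E M_entries D1_def[abs_def])

lemma dmap2_F: "2 \<le> n \<Longrightarrow> dmap s n k 2 (F n u) = E (n-2) (D2 (kpm s k) u)"
  by (simp add: dmap_def d2_F N_entries D2_def[abs_def])

lemma dmap_other: "i \<noteq> 1 \<Longrightarrow> \<not> (i = 2 \<and> 2 \<le> n) \<Longrightarrow> dmap s n k i x = 0"
  by (auto simp: dmap_def)

lemma kpm_mline: "kpm s (mline q t \<xi>) $ i $ j = kpm s q $ i $ j + t * kpm s \<xi> $ i $ j"
  by (simp add: kpm_def mline_def transpose_def)
lemma kmp_mline: "kmp s (mline q t \<xi>) $ i $ j = kmp s q $ i $ j + t * kmp s \<xi> $ i $ j"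
  by (simp add: kmp_def mline_def transpose_def)

lemma mm_aff_l: "(\<And>i j. P$i$j = A$i$j + t * B$i$j) \<Longrightarrow> ((P::mat2) ** X)$i$j = (A ** X)$i$j + t * (B ** X)$i$j"
  by (simp add: matrix_matrix_mult_def sum_UNIV2 algebra_simps)
lemma mm_aff_r: "(\<And>i j. P$i$j = A$i$j + t * B$i$j) \<Longrightarrow> (X ** (P::mat2))$i$j = (X ** A)$i$j + t * (X ** B)$i$j"
  by (simp add: matrix_matrix_mult_def sum_UNIV2 algebra_simps)

lemma d1_aff: "(\<And>i j. P$i$j = A$i$j + t * B$i$j) \<Longrightarrow> d1 n P x l = d1 n A x l + t * d1 n B x l"
  by (simp add: d1_def sum_UNIV2 algebra_simps)
lemma d2_aff: "(\<And>i j. P$i$j = A$i$j + t * B$i$j) \<Longrightarrow> d2 n P x l = d2 n A x l + t * d2 n B x l"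
  by (simp add: d2_def sum_UNIV2 algebra_simps)

lemma dmap_mline: "dmap s n (mline q t \<xi>) i x l = dmap s n q i x l + t * dmap s n \<xi> i x l"
proof -
  have a: "(kmp s (mline q t \<xi>) ** eps)$i$j = (kmp s q ** eps)$i$j + t * (kmp s \<xi> ** eps)$i$j" for i j
    by (rule mm_aff_l) (rule kmp_mline)
  have b: "(eps ** kpm s (mline q t \<xi>))$i$j = (eps ** kpm s q)$i$j + t * (eps ** kpm s \<xi>)$i$j" for i j
    by (rule mm_aff_r) (rule kpm_mline)
  have c: "(eps ** kpm s (mline q t \<xi>) ** eps)$i$j = (eps ** kpm s q ** eps)$i$j + t * (eps ** kpm s \<xi> ** eps)$i$j" for i j
    by (rule mm_aff_l) (rule b)
  show ?thesis
    by (auto simp: dmap_def intro: d1_aff[OF a] d2_aff[OF c])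
qed

lemma ddot_eq: "ddot s n q \<xi> i x = dmap s n \<xi> i x"
proof
  fix l
  have "((\<lambda>t. dmap s n q i x l + t * dmap s n \<xi> i x l) has_field_derivative dmap s n \<xi> i x l) (at 0)"
    by (auto intro!: derivative_eq_intros)
  then show "ddot s n q \<xi> i x l = dmap s n \<xi> i x l"
    unfolding ddot_def dmap_mline by (rule DERIV_imp_deriv)
qed


section \<open>Coordinates algebra\<close>

lemma mat2_nonzero: "(K::mat2) \<noteq> 0 \<Longrightarrow> K$0$0 \<noteq> 0 \<or> K$0$1 \<noteq> 0 \<or> K$1$0 \<noteq> 0 \<or> K$1$1 \<noteq> 0"
proof (rule ccontr)
  assume "K \<noteq> 0" "\<not> (K$0$0 \<noteq> 0 \<or> K$0$1 \<noteq> 0 \<or> K$1$0 \<noteq> 0 \<or> K$1$1 \<noteq> 0)"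
  then have "K$i$j = 0" for i j using two_cases[of i] two_cases[of j] by auto
  then have "K = 0" by (simp add: vec_eq_iff)
  then show False using \<open>K \<noteq> 0\<close> by simp
qed

lemma rank1:
  assumes d: "det (K::mat2) = 0" and K: "K \<noteq> 0"
  shows "\<exists>p q :: complex^2. (p$0 \<noteq> 0 \<or> p$1 \<noteq> 0) \<and> (q$0 \<noteq> 0 \<or> q$1 \<noteq> 0) \<and> (\<forall>i j. K$i$j = p$i * q$j)"
proof (cases "K$0$0 \<noteq> 0 \<or> K$0$1 \<noteq> 0")
  case True
  define lam where "lam = (if K$0$0 \<noteq> 0 then K$1$0 / K$0$0 else K$1$1 / K$0$1)"
  have dd: "K$0$0 * K$1$1 = K$0$1 * K$1$0" using d by (simp add: det2)
  have r: "K$1$j = lam * K$0$j" for j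
  proof -
    have "K$1$0 = lam * K$0$0 \<and> K$1$1 = lam * K$0$1"
    proof (cases "K$0$0 = 0")
      case z: True
      then have nz: "K$0$1 \<noteq> 0" using True by simp
      have "K$1$0 = 0" using dd z nz by simp
      then show ?thesis using z nz by (simp add: lam_def)
    next
      case z: False
      have "K$1$1 = K$0$1 * K$1$0 / K$0$0" using dd z by (simp add: eq_divide_eq mult.commute)
      then show ?thesis using z by (simp add: lam_def)
    qed
    then show ?thesis using two_cases[of j] by auto
  qed
  let ?p = "(\<chi> i. if i = 0 then 1 else lam) :: complex^2" and ?q = "(\<chi> j. K$0$j) :: complex^2"
  have "\<forall>i j. K$i$j = ?p$i * ?q$j"
  proof (intro allI)
    fix i j :: 2
    have "i = 0 \<or> i = 1" by (rule two_cases)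
    then show "K$i$j = ?p$i * ?q$j"
    proof
      assume "i = 0" then show ?thesis by simp
    next
      assume "i = 1" then show ?thesis by (simp add: r)
    qed
  qed
  moreover have "?p$0 \<noteq> 0 \<or> ?p$1 \<noteq> 0" by simp
  moreover have "?q$0 \<noteq> 0 \<or> ?q$1 \<noteq> 0" using True by simp
  ultimately show ?thesis by blast
next
  case False
  let ?p = "(\<chi> i. if i = 0 then 0 else 1) :: complex^2" and ?q = "(\<chi> j. K$1$j) :: complex^2"
  have "\<forall>i j. K$i$j = ?p$i * ?q$j"
  proof (intro allI)
    fix i j :: 2
    have "i = 0 \<or> i = 1" by (rule two_cases)
    then show "K$i$j = ?p$i * ?q$j"
    proof
      assume i: "i = 0"
      have "K$0$j = 0" using two_cases[of j] False by auto
      then show ?thesis using i by simp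
    next
      assume "i = 1" then show ?thesis by simp
    qed
  qed
  moreover have "?q$0 \<noteq> 0 \<or> ?q$1 \<noteq> 0" using False mat2_nonzero[OF K] by auto
  moreover have "?p$0 \<noteq> 0 \<or> ?p$1 \<noteq> 0" by simp
  ultimately show ?thesis by blast
qed

lemma ker1_det:
  assumes d: "det K \<noteq> 0" and n: "1 \<le> n" and z: "\<forall>w\<le>n-1. \<forall>x. D1 K t w x = 0" and j: "j \<le> n"
  shows "t j = 0"
proof -
  have e: "K$0$x * t (Suc w) = K$1$x * t w" if "w \<le> n-1" for w x using z that by (auto simp: D1_def)
  have low: "t w = 0" if w: "w \<le> n - 1" for w
  proof -
    have "t w * det K = K$0$0 * (K$1$1 * t w) - K$0$1 * (K$1$0 * t w)" by (simp add: det2 algebra_simps)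
    also have "\<dots> = K$0$0 * (K$0$1 * t (Suc w)) - K$0$1 * (K$0$0 * t (Suc w))" using e[OF w] by simp
    also have "\<dots> = 0" by simp
    finally show ?thesis using d by simp
  qed
  show ?thesis
  proof (cases "j \<le> n - 1")
    case True then show ?thesis using low by blast
  next
    case False
    then have jn: "j = Suc (n - 1)" using j n by simp
    have k0: "K$0$x * t j = 0" for x using e[of "n-1" x] low[of "n-1"] jn by simp
    have "t j \<noteq> 0 \<Longrightarrow> K$0$0 = 0 \<and> K$0$1 = 0" using k0[of 0] k0[of 1] by auto
    then show ?thesis using d by (cases "t j = 0") (auto simp: det2)
  qed
qed

definition tau :: "complex^2 \<Rightarrow> nat \<Rightarrow> nat \<Rightarrow> complex" where
  "tau p n j = p$1 ^ j * p$0 ^ (n - j)"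

lemma tau_rel: "w < n \<Longrightarrow> p$0 * tau p n (Suc w) = p$1 * tau p n w"
proof -
  assume "w < n"
  then have "n - w = Suc (n - Suc w)" by simp
  then show ?thesis by (simp add: tau_def)
qed

lemma tau_nonzero: "p$0 \<noteq> 0 \<or> p$1 \<noteq> 0 \<Longrightarrow> \<exists>j\<le>n. tau p n j \<noteq> 0"
proof -
  assume p: "p$0 \<noteq> 0 \<or> p$1 \<noteq> 0"
  show ?thesis
  proof (cases "p$0 = 0")
    case False then show ?thesis by (intro exI[of _ 0]) (simp add: tau_def)
  next
    case True then show ?thesis using p by (intro exI[of _ n]) (simp add: tau_def)
  qed
qed

lemma D1_rank1: "(\<forall>i j. K$i$j = p$i * q$j) \<Longrightarrow> D1 K t w x = q$x * (p$0 * t (Suc w) - p$1 * t w)"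
  by (simp add: D1_def algebra_simps)

lemma D2_rank1: "(\<forall>i j. K$i$j = p$i * q$j) \<Longrightarrow>
   D2 K u v = p$1 * (q$0 * u v 1 - q$1 * u v 0) - p$0 * (q$0 * u (Suc v) 1 - q$1 * u (Suc v) 0)"
  by (simp add: D2_def algebra_simps)

lemma ker1_rank1:
  assumes K: "\<forall>i j. K$i$j = p$i * q$j" and q: "q$0 \<noteq> 0 \<or> q$1 \<noteq> 0" and p: "p$0 \<noteq> 0 \<or> p$1 \<noteq> 0"
    and z: "\<forall>w\<le>n-1. \<forall>x. D1 K t w x = 0" and n: "1 \<le> n"
  shows "\<exists>c. \<forall>j\<le>n. t j = c * tau p n j"
proof -
  have rel: "p$0 * t (Suc w) = p$1 * t w" if "w < n" for w
  proof -
    have h: "q$x * (p$0 * t (Suc w) - p$1 * t w) = 0" for x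
    proof -
      have "D1 K t w x = 0" using z that by auto
      then show ?thesis by (simp only: D1_rank1[OF K])
    qed
    have "p$0 * t (Suc w) - p$1 * t w = 0" using h[of 0] h[of 1] q by auto
    then show ?thesis by simp
  qed
  show ?thesis
  proof (cases "p$0 = 0")
    case True
    then have p1: "p$1 \<noteq> 0" using p by simp
    have tw: "t w = 0" if "w < n" for w using rel[OF that] True p1 by simp
    show ?thesis
    proof (intro exI[of _ "t n / p$1 ^ n"] allI impI)
      fix j assume "j \<le> n"
      then show "t j = t n / p$1 ^ n * tau p n j"
        using tw[of j] True p1 by (cases "j = n") (auto simp: tau_def)
    qed
  next
    case False
    have tj: "t j = t 0 * (p$1 / p$0) ^ j" if "j \<le> n" for j
      using that
    proof (induct j)
      case 0 then show ?case by simp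
    next
      case (Suc j)
      then have "t (Suc j) = p$1 * t j / p$0" using rel[of j] False by (simp add: field_simps)
      then show ?case using Suc by (simp add: field_simps)
    qed
    show ?thesis
    proof (intro exI[of _ "t 0 / p$0 ^ n"] allI impI)
      fix j assume j: "j \<le> n"
      have "p$0 ^ n = p$0 ^ j * p$0 ^ (n - j)" using j by (simp add: power_add[symmetric])
      then show "t j = t 0 / p$0 ^ n * tau p n j"
        using tj[OF j] False by (simp add: tau_def field_simps power_divide)
    qed
  qed
qed

lemma surj_det:
  assumes d: "det K \<noteq> 0" shows "\<exists>u. \<forall>v'. D2 K u v' = dl v v'"
proof (intro exI allI)
  fix v'
  have g: "D2 K (\<lambda>w x. K$0$x * c w) v' = - det K * c v'" for c by (simp add: D2_def det2 algebra_simps)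
  have "D2 K (\<lambda>w x. K$0$x * (- dl v w / det K)) v' = - det K * (- dl v v' / det K)" by (rule g)
  then show "D2 K (\<lambda>w x. K$0$x * (- dl v w / det K)) v' = dl v v'" using d by simp
qed

lemma seq_sol:
  assumes p: "p0 \<noteq> 0 \<or> p1 \<noteq> (0::complex)" shows "\<exists>\<sigma>. \<forall>v'. p1 * \<sigma> v' - p0 * \<sigma> (Suc v') = dl v v'"
proof (cases "p1 = 0")
  case True
  then have "p0 \<noteq> 0" using p by simp
  then show ?thesis using True
    by (intro exI[of _ "\<lambda>w. if w = Suc v then - 1 / p0 else 0"]) (auto simp: dl_def)
next
  case False
  define \<sigma> where "\<sigma> w = (if w \<le> v then p0 ^ (v - w) / p1 ^ Suc (v - w) else 0)" for w
  have "p1 * \<sigma> v' - p0 * \<sigma> (Suc v') = dl v v'" for v'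
  proof (cases "v' < v")
    case True
    define e where "e = v - Suc v'"
    have e: "v - v' = Suc e" using True by (simp add: e_def)
    have "p1 * (p0 ^ Suc e / p1 ^ Suc (Suc e)) - p0 * (p0 ^ e / p1 ^ Suc e) = 0"
      using False by (simp add: field_simps)
    then show ?thesis using True e by (simp add: \<sigma>_def dl_def e_def)
  next
    case nl: False
    then show ?thesis using False by (cases "v' = v") (auto simp: \<sigma>_def dl_def)
  qed
  then show ?thesis by blast
qed

lemma surj_rank1:
  assumes K: "\<forall>i j. K$i$j = p$i * q$j" and q: "q$0 \<noteq> 0 \<or> q$1 \<noteq> 0" and p: "p$0 \<noteq> 0 \<or> p$1 \<noteq> 0"
  shows "\<exists>u. \<forall>v'. D2 K u v' = dl v v'"
proof -
  obtain \<sigma> where s: "\<And>v'. p$1 * \<sigma> v' - p$0 * \<sigma> (Suc v') = dl v v'" using seq_sol[OF p] by blast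
  obtain b0 b1 where b: "q$0 * b1 - q$1 * b0 = 1"
  proof (cases "q$0 = 0")
    case True
    then have "q$0 * 0 - q$1 * (- 1 / q$1) = 1" using q by simp
    then show ?thesis by (rule that)
  next
    case False
    then have "q$0 * (1 / q$0) - q$1 * 0 = 1" by simp
    then show ?thesis by (rule that)
  qed
  let ?u = "\<lambda>w x. \<sigma> w * (if x = 1 then b1 else b0)"
  have "D2 K ?u v' = dl v v'" for v'
  proof -
    have "D2 K ?u v' = (p$1 * \<sigma> v' - p$0 * \<sigma> (Suc v')) * (q$0 * b1 - q$1 * b0)"
      by (simp add: D2_rank1[OF K] algebra_simps)
    then show ?thesis using s b by simp
  qed
  then show ?thesis by blast
qed


section \<open>Homology dimensions\<close>

lemma det_kpm: "det (kpm s k) = det k"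
  by (simp add: kpm_def det_transpose)

lemma kpm_kpm: "kpm s (kpm s k) = k"
  by (simp add: kpm_def transpose_transpose)

lemma kpm_zero: "kpm s k = 0 \<longleftrightarrow> k = 0"
proof -
  have "transpose k = 0 \<longleftrightarrow> k = 0"
    by (auto simp: transpose_def vec_eq_iff)
  then show ?thesis unfolding kpm_def by simp
qed

lemma tdim_zero: "tdim {0} = 0"
proof -
  have "tdim {0} = tdim (TV.span {})" by (simp add: TV.span_empty)
  also have "\<dots> = 0" using TV.dim_span_eq_card_independent[OF TV.independent_empty] by simp
  finally show ?thesis .
qed

lemma fin_E: "\<exists>B. finite B \<and> range (E m) \<subseteq> tspan B"
  using E_basis by blast

lemma fin_F: assumes n: "1 \<le> n" shows "\<exists>B. finite B \<and> range (F n) \<subseteq> tspan B"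
proof (rule exI, rule conjI)
  show "finite ((\<lambda>(j,c). F n (dl2 j c)) ` ({..n-1} \<times> (UNIV :: 2 set)))" by simp
  show "range (F n) \<subseteq> tspan ((\<lambda>(j,c). F n (dl2 j c)) ` ({..n-1} \<times> UNIV))"
    using F_basis[OF n] by (rule equalityD1)
qed

lemma surj_coord:
  assumes K: "(K::mat2) \<noteq> 0" shows "\<exists>u. \<forall>v'. D2 K u v' = dl v v'"
proof (cases "det K = 0")
  case True
  then obtain p q where pq: "p$0 \<noteq> 0 \<or> p$1 \<noteq> 0" "q$0 \<noteq> 0 \<or> q$1 \<noteq> 0" "\<forall>i j. K$i$j = p$i * q$j"
    using rank1[OF _ K] by blast
  show ?thesis by (rule surj_rank1[OF pq(3) pq(2) pq(1)])
next
  case False then show ?thesis by (rule surj_det)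
qed

lemma im2: assumes n: "2 \<le> n" and k: "k \<noteq> 0"
  shows "dmap s n k 2 ` Cterm n 2 = Cterm n 3"
proof
  have n1: "1 \<le> n" using n by simp
  show "dmap s n k 2 ` Cterm n 2 \<subseteq> Cterm n 3"
    unfolding Cterm2[OF n1] Cterm3[OF n] using dmap2_F[OF n] by auto
  interpret L: Vector_Spaces.linear tscale tscale "dmap s n k 2" by (rule lin_dmap)
  have sub: "TV.subspace (dmap s n k 2 ` Cterm n 2)"
    unfolding Cterm2[OF n1] by (rule L.subspace_image[OF subspace_F])
  have K: "kpm s k \<noteq> 0" using k kpm_zero by blast
  have "E (n-2) (dl v) \<in> dmap s n k 2 ` Cterm n 2" for v
  proof -
    obtain u where u: "\<And>v'. D2 (kpm s k) u v' = dl v v'" using surj_coord[OF K] by blast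
    have "D2 (kpm s k) u = dl v" by (rule ext) (rule u)
    then have "E (n-2) (dl v) = dmap s n k 2 (F n u)" using dmap2_F[OF n] by simp
    then show ?thesis unfolding Cterm2[OF n1] by auto
  qed
  then show "Cterm n 3 \<subseteq> dmap s n k 2 ` Cterm n 2"
    unfolding Cterm3[OF n] E_basis by (intro TV.span_minimal[OF _ sub]) auto
qed

definition kerset :: "bool \<Rightarrow> nat \<Rightarrow> mat2 \<Rightarrow> int \<Rightarrow> tensor set" where
  "kerset s n k i = {x \<in> Cterm n i. dmap s n k i x = 0}"

lemma rn1: "1 \<le> n \<Longrightarrow> tdim (kerset s n k 1) + tdim (dmap s n k 1 ` Cterm n 1) = n + 1"
proof -
  obtain B where B: "finite B" "range (E n) \<subseteq> tspan B" using fin_E by blast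
  show ?thesis
    using TV.rank_nullity_sub[OF lin_dmap subspace_E B] by (simp add: kerset_def Cterm1 dim_E)
qed

lemma dim_ker2: assumes n: "1 \<le> n" and k: "k \<noteq> 0" shows "tdim (kerset s n k 2) = n + 1"
proof (cases "n = 1")
  case True
  then have "kerset s n k 2 = Cterm n 2" by (auto simp: kerset_def dmap_def)
  then show ?thesis using True dim_F[OF n] Cterm2[OF n] by simp
next
  case False
  then have n2: "2 \<le> n" using n by simp
  obtain B where B: "finite B" "range (F n) \<subseteq> tspan B" using fin_F[OF n] by blast
  have "tdim (kerset s n k 2) + tdim (dmap s n k 2 ` Cterm n 2) = 2 * n"
    using TV.rank_nullity_sub[OF lin_dmap subspace_F B] by (simp add: kerset_def Cterm2[OF n] dim_F[OF n])
  moreover have "tdim (dmap s n k 2 ` Cterm n 2) = n - 1"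
    using im2[OF n2 k] Cterm3[OF n2] dim_E[of "n-2"] n2 by simp
  ultimately show ?thesis using n2 by simp
qed

lemma hdims:
  assumes n: "1 \<le> n" and k: "k \<noteq> 0"
  shows "hdim s n k i = (if i = 1 \<or> i = 2 then tdim (kerset s n k 1) else 0)"
proof -
  have h: "hdim s n k i = tdim (kerset s n k i) - tdim (dmap s n k (i - 1) ` Cterm n (i - 1))"
    by (simp add: hdim_def kerset_def)
  consider "i = 1" | "i = 2" | "i = 3" | "i \<noteq> 1 \<and> i \<noteq> 2 \<and> i \<noteq> 3" by blast
  then show ?thesis
  proof cases
    case 1
    have "Cterm n 0 = {0}" by (rule Cterm_other) auto
    moreover have "dmap s n k 0 0 = 0" by (rule dmap_other) auto
    ultimately have "dmap s n k (i - 1) ` Cterm n (i - 1) = {0}" using 1 by simp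
    then show ?thesis using h 1 tdim_zero by simp
  next
    case 2
    have "tdim (kerset s n k 1) + tdim (dmap s n k 1 ` Cterm n 1) = n + 1" by (rule rn1[OF n])
    then show ?thesis using h 2 dim_ker2[OF n k] by simp
  next
    case 3
    have ker: "kerset s n k 3 = Cterm n 3" by (auto simp: kerset_def dmap_other)
    show ?thesis
    proof (cases "2 \<le> n")
      case True
      have "tdim (dmap s n k 2 ` Cterm n 2) = tdim (Cterm n 3)" using im2[OF True k] by simp
      then show ?thesis using h 3 ker by simp
    next
      case False
      then have "Cterm n 3 = {0}" by (intro Cterm_other) auto
      then show ?thesis using h 3 ker tdim_zero by simp
    qed
  next
    case 4
    then have C0: "Cterm n i = {0}" using Cterm_other[of i n] by blast
    have "kerset s n k i = {0}" unfolding kerset_def C0 using dmap_other[of i n s k 0] 4 by auto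
    then show ?thesis using h 4 tdim_zero by simp
  qed
qed


lemma F_zero_iff: "1 \<le> n \<Longrightarrow> F n u = 0 \<longleftrightarrow> (\<forall>j\<le>n-1. \<forall>c. u j c = 0)"
  using F_eq_iff[of n u "\<lambda>j c. 0"] F_zero[of n] by simp

lemma E_zero_iff: "E m t = 0 \<longleftrightarrow> (\<forall>j\<le>m. t j = 0)"
  using E_eq_iff[of m t "\<lambda>j. 0"] E_zero[of m] by simp

lemma ker1_coords: "1 \<le> n \<Longrightarrow> E n t \<in> kerset s n k 1 \<longleftrightarrow> (\<forall>w\<le>n-1. \<forall>x. D1 (kpm s k) t w x = 0)"
  by (simp add: kerset_def Cterm1 dmap1_E F_zero_iff)

lemma ker1_det_set: assumes n: "1 \<le> n" and d: "det k \<noteq> 0" shows "kerset s n k 1 = {0}"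
proof
  show "kerset s n k 1 \<subseteq> {0}"
  proof
    fix x assume x: "x \<in> kerset s n k 1"
    then obtain t where t: "x = E n t" by (auto simp: kerset_def Cterm1)
    have "\<forall>w\<le>n-1. \<forall>x. D1 (kpm s k) t w x = 0" using x t ker1_coords[OF n] by simp
    then have "\<forall>j\<le>n. t j = 0" using ker1_det[of "kpm s k" n t] d n by (simp add: det_kpm)
    then show "x \<in> {0}" using t E_zero_iff by simp
  qed
  interpret L: Vector_Spaces.linear tscale tscale "dmap s n k 1" by (rule lin_dmap)
  show "{0} \<subseteq> kerset s n k 1"
    using TV.subspace_0[OF subspace_E[of n]] by (simp add: kerset_def Cterm1)
qed

lemma ker1_rank1_set:
  assumes n: "1 \<le> n" and K: "\<forall>i j. kpm s k $i$j = p$i * q$j" and q: "q$0 \<noteq> 0 \<or> q$1 \<noteq> 0"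
    and p: "p$0 \<noteq> 0 \<or> p$1 \<noteq> 0"
  shows "kerset s n k 1 = range (\<lambda>c. tscale c (E n (tau p n)))" "tdim (kerset s n k 1) = 1"
proof -
  show eq: "kerset s n k 1 = range (\<lambda>c. tscale c (E n (tau p n)))"
  proof
    show "kerset s n k 1 \<subseteq> range (\<lambda>c. tscale c (E n (tau p n)))"
    proof
      fix x assume x: "x \<in> kerset s n k 1"
      then obtain t where t: "x = E n t" by (auto simp: kerset_def Cterm1)
      have "\<forall>w\<le>n-1. \<forall>x. D1 (kpm s k) t w x = 0" using x t ker1_coords[OF n] by simp
      then obtain c where c: "\<forall>j\<le>n. t j = c * tau p n j" using ker1_rank1[OF K q p _ n] by blast
      have "x = tscale c (E n (tau p n))" unfolding t E_scale E_eq_iff using c by simp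
      then show "x \<in> range (\<lambda>c. tscale c (E n (tau p n)))" by blast
    qed
    show "range (\<lambda>c. tscale c (E n (tau p n))) \<subseteq> kerset s n k 1"
    proof
      fix x assume "x \<in> range (\<lambda>c. tscale c (E n (tau p n)))"
      then obtain c where c: "x = E n (\<lambda>j. c * tau p n j)" by (auto simp: E_scale)
      have "D1 (kpm s k) (\<lambda>j. c * tau p n j) w y = 0" if "w \<le> n - 1" for w y
      proof -
        have "w < n" using that n by simp
        then have "p$0 * tau p n (Suc w) = p$1 * tau p n w" by (rule tau_rel)
        then show ?thesis by (simp add: D1_rank1[OF K] algebra_simps)
      qed
      then show "x \<in> kerset s n k 1" using c ker1_coords[OF n] by simp
    qed
  qed
  have nz: "E n (tau p n) \<noteq> 0" using tau_nonzero[OF p, of n] E_zero_iff by auto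
  have "range (\<lambda>c. tscale c (E n (tau p n))) = TV.span {E n (tau p n)}"
    by (simp add: TV.span_singleton)
  then show "tdim (kerset s n k 1) = 1" unfolding eq using nz TV.dim_eq_card_independent[of "{E n (tau p n)}"]
    by simp
qed

lemma homology_det: assumes n: "1 \<le> n" and d: "det k \<noteq> 0" shows "hdim s n k i = 0"
proof -
  have "k \<noteq> 0" using d by (auto simp: det2)
  then show ?thesis using hdims[OF n] ker1_det_set[OF n d] tdim_zero by simp
qed

lemma homology_rank1: assumes n: "1 \<le> n" and d: "det k = 0" and k: "k \<noteq> 0"
  shows "hdim s n k i = (if i = 1 \<or> i = 2 then 1 else 0)"
proof -
  have K: "kpm s k \<noteq> 0" using k kpm_zero by blast
  obtain p q where pq: "p$0 \<noteq> 0 \<or> p$1 \<noteq> 0" "q$0 \<noteq> 0 \<or> q$1 \<noteq> 0" "\<forall>i j. kpm s k $i$j = p$i * q$j"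
    using rank1[OF _ K] d det_kpm by metis
  show ?thesis using hdims[OF n k] ker1_rank1_set(2)[OF n pq(3) pq(2) pq(1)] by simp
qed


section \<open>Regular homology point\<close>

lemma nsq: "z * cnj z = complex_of_real (cmod z ^ 2)"
  by (rule complex_norm_square[symmetric])

lemma sq2_nz: "a \<noteq> 0 \<or> b \<noteq> 0 \<Longrightarrow> a * cnj a + b * cnj b \<noteq> (0::complex)"
proof -
  assume ab: "a \<noteq> 0 \<or> b \<noteq> 0"
  have "cmod a ^ 2 + cmod b ^ 2 > 0" using ab by (auto simp: add_pos_nonneg add_nonneg_pos)
  then have "complex_of_real (cmod a ^ 2 + cmod b ^ 2) \<noteq> 0" by (simp only: of_real_eq_0_iff)
  moreover have "a * cnj a + b * cnj b = complex_of_real (cmod a ^ 2 + cmod b ^ 2)" by (simp only: nsq of_real_add)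
  ultimately show ?thesis by simp
qed

lemma sq4_nz: "a \<noteq> 0 \<or> b \<noteq> 0 \<or> c \<noteq> 0 \<or> d \<noteq> 0 \<Longrightarrow> a * cnj a + b * cnj b + c * cnj c + d * cnj d \<noteq> (0::complex)"
proof -
  assume ab: "a \<noteq> 0 \<or> b \<noteq> 0 \<or> c \<noteq> 0 \<or> d \<noteq> 0"
  have "cmod a ^ 2 + cmod b ^ 2 + cmod c ^ 2 + cmod d ^ 2 > 0" using ab
    by (auto simp: add_pos_nonneg add_nonneg_pos)
  then have "complex_of_real (cmod a ^ 2 + cmod b ^ 2 + cmod c ^ 2 + cmod d ^ 2) \<noteq> 0" by (simp only: of_real_eq_0_iff)
  moreover have "a * cnj a + b * cnj b + c * cnj c + d * cnj d = complex_of_real (cmod a ^ 2 + cmod b ^ 2 + cmod c ^ 2 + cmod d ^ 2)"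
    by (simp only: nsq of_real_add)
  ultimately show ?thesis by simp
qed

definition cof :: "mat2 \<Rightarrow> mat2" where
  "cof K = (\<chi> i j. if i = 0 then (if j = 0 then cnj (K$1$1) else - cnj (K$1$0))
                    else (if j = 0 then - cnj (K$0$1) else cnj (K$0$0)))"

lemma cof_entries: "cof K $0$0 = cnj (K$1$1)" "cof K $0$1 = - cnj (K$1$0)"
  "cof K $1$0 = - cnj (K$0$1)" "cof K $1$1 = cnj (K$0$0)"
  by (simp_all add: cof_def)

lemma kpm_cof: "kpm s (cof Q) = cof (kpm s Q)"
proof -
  have "transpose (cof Q) = cof (transpose Q)"
  proof -
    have "transpose (cof Q) $ i $ j = cof (transpose Q) $ i $ j" for i j
      using two_cases[of i] two_cases[of j] by (auto simp: transpose_def cof_entries)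
    then show ?thesis by (simp add: vec_eq_iff)
  qed
  then show ?thesis by (simp add: kpm_def)
qed

lemma Qdot_cof: assumes q: "(Q::mat2) \<noteq> 0" shows "Qdot_nonzero Q (cof Q)"
proof -
  let ?x = "cof Q"
  have f: "(\<lambda>t. det (mline Q t ?x)) = (\<lambda>t. (Q$0$0 + t * ?x$0$0) * (Q$1$1 + t * ?x$1$1) - (Q$0$1 + t * ?x$0$1) * (Q$1$0 + t * ?x$1$0))"
    by (simp add: det2 mline_def fun_eq_iff)
  define D where "D = Q$0$0 * ?x$1$1 + ?x$0$0 * Q$1$1 - (Q$0$1 * ?x$1$0 + ?x$0$1 * Q$1$0)"
  have "((\<lambda>t. (Q$0$0 + t * ?x$0$0) * (Q$1$1 + t * ?x$1$1) - (Q$0$1 + t * ?x$0$1) * (Q$1$0 + t * ?x$1$0)) has_field_derivative D) (at 0)"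
    unfolding D_def by (auto intro!: derivative_eq_intros)
  moreover have "D = Q$0$0 * cnj (Q$0$0) + Q$1$1 * cnj (Q$1$1) + Q$0$1 * cnj (Q$0$1) + Q$1$0 * cnj (Q$1$0)"
    by (simp add: D_def cof_entries algebra_simps)
  then have "D \<noteq> 0" using sq4_nz mat2_nonzero[OF q] by metis
  ultimately show ?thesis unfolding Qdot_nonzero_def f by blast
qed

definition vv :: "complex^2 \<Rightarrow> 2 \<Rightarrow> complex" where
  "vv b x = (if x = 0 then cnj (b$1) else - cnj (b$0))"
definition sg :: "complex^2 \<Rightarrow> (nat \<Rightarrow> complex) \<Rightarrow> nat \<Rightarrow> complex" where
  "sg a t w = cnj (a$1) * t (Suc w) + cnj (a$0) * t w"

lemma D1_cof: assumes K: "\<forall>i j. K$i$j = a$i * b$j" shows "D1 (cof K) t w x = vv b x * sg a t w"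
proof -
  have "x = 0 \<or> x = 1" by (rule two_cases)
  then show ?thesis
  proof
    assume "x = 0" then show ?thesis by (simp add: D1_def cof_entries K vv_def sg_def algebra_simps)
  next
    assume "x = 1" then show ?thesis by (simp add: D1_def cof_entries K vv_def sg_def algebra_simps)
  qed
qed

lemma phi_D1: assumes K: "\<forall>i j. K$i$j = a$i * b$j" shows "b$0 * D1 K t w 1 - b$1 * D1 K t w 0 = 0"
  by (simp add: D1_rank1[OF K] algebra_simps)

lemma phi_vv: "b$0 * vv b 1 - b$1 * vv b 0 = - (b$0 * cnj (b$0) + b$1 * cnj (b$1))"
  by (simp add: vv_def algebra_simps)

lemma sg_rel: "Suc v < n \<Longrightarrow> a$1 * sg a (tau a n) v = a$0 * sg a (tau a n) (Suc v)"
proof -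
  assume v: "Suc v < n"
  have r1: "a$0 * tau a n (Suc v) = a$1 * tau a n v" by (rule tau_rel) (use v in simp)
  have r2: "a$0 * tau a n (Suc (Suc v)) = a$1 * tau a n (Suc v)" by (rule tau_rel[OF v])
  show ?thesis unfolding sg_def using r1 r2 by (simp add: algebra_simps) (metis mult.left_commute)
qed

lemma sg_nz: assumes a: "a$0 \<noteq> 0 \<or> a$1 \<noteq> 0" and n: "1 \<le> n" shows "\<exists>w\<le>n-1. sg a (tau a n) w \<noteq> 0"
proof (cases "a$0 = 0")
  case True
  then have a1: "a$1 \<noteq> 0" using a by simp
  have "sg a (tau a n) (n - 1) = cnj (a$1) * a$1 ^ n" using True n by (simp add: sg_def tau_def)
  then show ?thesis using a1 by (intro exI[of _ "n-1"]) simp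
next
  case False
  have "sg a (tau a n) 0 = a$0 ^ (n - 1) * (a$1 * cnj (a$1) + a$0 * cnj (a$0))"
  proof -
    have "a$0 ^ n = a$0 * a$0 ^ (n - 1)" using n by (metis Suc_diff_le diff_Suc_1 power_Suc)
    then show ?thesis by (simp add: sg_def tau_def algebra_simps)
  qed
  moreover have "a$1 * cnj (a$1) + a$0 * cnj (a$0) \<noteq> 0" using sq2_nz a by metis
  ultimately show ?thesis using False by (intro exI[of _ 0]) simp
qed


lemma zero_Cterm: "0 \<in> Cterm n i"
  by (simp add: Cterm_def TV.span_zero)

lemma dmap_0: "dmap s n k i 0 = 0"
  by (auto simp: dmap_def d1_def d2_def fun_eq_iff)

lemma D2_D1: "D2 K (D1 K t) v = 0"
  by (simp add: D2_def D1_def algebra_simps)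

lemma kerset_sub: "kerset s n k i \<subseteq> Cterm n i"
  by (auto simp: kerset_def)

lemma induced:
  assumes n: "1 \<le> n" and d: "det Q = 0" and Q: "Q \<noteq> 0"
  shows "induced_exact s n Q (cof Q)"
proof -
  let ?K = "kpm s Q"
  have K0: "?K \<noteq> 0" using Q kpm_zero by blast
  obtain a b where ab: "a$0 \<noteq> 0 \<or> a$1 \<noteq> 0" "b$0 \<noteq> 0 \<or> b$1 \<noteq> 0" "\<forall>i j. ?K$i$j = a$i * b$j"
    using rank1[OF _ K0] d det_kpm by metis
  define \<tau> where "\<tau> = tau a n"
  define g where "g = dmap s n (cof Q) 1 (E n \<tau>)"
  have g_eq: "g = F n (\<lambda>w x. vv b x * sg a \<tau> w)"
    unfolding g_def dmap1_E[OF n] kpm_cof D1_cof[OF ab(3)] by simp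
  interpret L1: Vector_Spaces.linear tscale tscale "dmap s n Q 1" by (rule lin_dmap)
  interpret Lx1: Vector_Spaces.linear tscale tscale "dmap s n (cof Q) 1" by (rule lin_dmap)
  interpret L2: Vector_Spaces.linear tscale tscale "dmap s n Q 2" by (rule lin_dmap)
  define im1 where "im1 = dmap s n Q 1 ` Cterm n 1"
  have sub_im1: "TV.subspace im1" unfolding im1_def Cterm1 by (rule L1.subspace_image[OF subspace_E])
  have Nb: "b$0 * cnj (b$0) + b$1 * cnj (b$1) \<noteq> 0" using sq2_nz ab(2) by metis
  have g_notin: "g \<notin> im1"
  proof
    assume "g \<in> im1"
    then obtain t where t: "g = F n (D1 ?K t)" unfolding im1_def Cterm1 using dmap1_E[OF n] by auto
    obtain w0 where w0: "w0 \<le> n - 1" "sg a \<tau> w0 \<noteq> 0" using sg_nz[OF ab(1) n] \<tau>_def by blast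
    have e: "vv b x * sg a \<tau> w0 = D1 ?K t w0 x" for x using t g_eq F_eq_iff[OF n] w0(1) by auto
    have "sg a \<tau> w0 * (b$0 * vv b 1 - b$1 * vv b 0) = b$0 * D1 ?K t w0 1 - b$1 * D1 ?K t w0 0"
      using e[of 0] e[of 1] by (simp add: algebra_simps)
    also have "\<dots> = 0" by (rule phi_D1[OF ab(3)])
    finally have "sg a \<tau> w0 * (- (b$0 * cnj (b$0) + b$1 * cnj (b$1))) = 0" unfolding phi_vv .
    then have "sg a \<tau> w0 = 0 \<or> b$0 * cnj (b$0) + b$1 * cnj (b$1) = 0"
      by (simp only: mult_eq_0_iff neg_equal_0_iff_equal)
    then show False using w0(2) Nb by blast
  qed
  have ker1: "kerset s n Q 1 = range (\<lambda>c. tscale c (E n \<tau>))" "tdim (kerset s n Q 1) = 1"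
    using ker1_rank1_set[OF n ab(3) ab(2) ab(1)] \<tau>_def by auto
  have C2: "Cterm n 2 = range (F n)" by (rule Cterm2[OF n])
  obtain B0 where B0: "finite B0" "range (F n) \<subseteq> tspan B0" using fin_F[OF n] by blast
  have im1_C2: "im1 \<subseteq> Cterm n 2" unfolding im1_def Cterm1 C2 using dmap1_E[OF n] by auto
  have d2zero: "dmap s n Q 2 (F n u) = 0" if "\<forall>v. Suc v < n \<longrightarrow> D2 ?K u v = 0" for u
  proof (cases "2 \<le> n")
    case True
    have "E (n - 2) (D2 ?K u) = 0" unfolding E_zero_iff using that True by auto
    then show ?thesis using dmap2_F[OF True] by simp
  next
    case False then show ?thesis by (simp add: dmap_other)
  qed
  have g_ker: "g \<in> kerset s n Q 2"
  proof -
    have "D2 ?K (\<lambda>w x. vv b x * sg a \<tau> w) v = 0" if "Suc v < n" for v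
    proof -
      have "D2 ?K (\<lambda>w x. vv b x * sg a \<tau> w) v = (b$0 * vv b 1 - b$1 * vv b 0) * (a$1 * sg a \<tau> v - a$0 * sg a \<tau> (Suc v))"
        by (simp add: D2_rank1[OF ab(3)] algebra_simps)
      then show ?thesis using sg_rel[OF that] \<tau>_def by simp
    qed
    then show ?thesis using d2zero g_eq by (simp add: kerset_def C2)
  qed
  have im1_ker: "im1 \<subseteq> kerset s n Q 2"
  proof
    fix y assume "y \<in> im1"
    then obtain t where t: "y = F n (D1 ?K t)" unfolding im1_def Cterm1 using dmap1_E[OF n] by auto
    then show "y \<in> kerset s n Q 2" using d2zero[of "D1 ?K t"] D2_D1 by (simp add: kerset_def C2)
  qed
  have subT: "TV.subspace (kerset s n Q 2)"
  proof -
    have "kerset s n Q 2 = Cterm n 2 \<inter> {x. dmap s n Q 2 x = 0}" by (auto simp: kerset_def)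
    then show ?thesis using TV.subspace_inter[OF _ L2.subspace_kernel] subspace_F C2 by simp
  qed
  have dim_im1: "tdim im1 = n" using rn1[OF n, of s Q] ker1(2) im1_def by simp
  have span_im1: "tspan im1 = im1" using sub_im1 by (simp add: TV.span_eq_iff)
  have dimA: "tdim (tspan (insert g im1)) = n + 1"
  proof -
    have "tdim (insert g im1) = tdim im1 + 1"
    proof (rule TV.dim_insert_fd[OF B0(1)])
      show "im1 \<subseteq> tspan B0" using im1_C2 B0(2) C2 by blast
      show "g \<notin> tspan im1" unfolding span_im1 by (rule g_notin)
    qed
    then show ?thesis using dim_im1 by simp
  qed
  have T_sub: "kerset s n Q 2 \<subseteq> tspan (insert g im1)"
  proof (rule TV.subspace_dim_eq_sub[OF B0(1)])
    show "kerset s n Q 2 \<subseteq> tspan B0" using kerset_sub B0(2) C2 by blast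
    show "TV.subspace (tspan (insert g im1))" by (rule TV.subspace_span)
    show "TV.subspace (kerset s n Q 2)" by (rule subT)
    show "tspan (insert g im1) \<subseteq> kerset s n Q 2"
      using g_ker im1_ker by (intro TV.span_minimal[OF _ subT]) auto
    show "tdim (tspan (insert g im1)) = tdim (kerset s n Q 2)" using dimA dim_ker2[OF n Q] by simp
  qed
  show ?thesis unfolding induced_exact_def ddot_eq
  proof (intro allI ballI impI)
    fix i x
    assume xC: "x \<in> Cterm n i"
      and H: "dmap s n Q i x = 0 \<and> dmap s n (cof Q) i x \<in> dmap s n Q i ` Cterm n i"
    have suff: "\<exists>y\<in>Cterm n (i - 1). \<exists>w\<in>Cterm n (i - 1). dmap s n Q (i - 1) y = 0 \<and>
             x = (\<lambda>l. dmap s n (cof Q) (i - 1) y l + dmap s n Q (i - 1) w l)"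
      if "y \<in> Cterm n (i - 1)" "w \<in> Cterm n (i - 1)" "dmap s n Q (i - 1) y = 0"
         "x = dmap s n (cof Q) (i - 1) y + dmap s n Q (i - 1) w" for y w
      using that by (auto simp: plus_fun_def)
    consider "i = 1" | "i = 2" | "i = 3" | "i \<noteq> 1 \<and> i \<noteq> 2 \<and> i \<noteq> 3" by blast
    then show "\<exists>y\<in>Cterm n (i - 1). \<exists>w\<in>Cterm n (i - 1). dmap s n Q (i - 1) y = 0 \<and>
             x = (\<lambda>l. dmap s n (cof Q) (i - 1) y l + dmap s n Q (i - 1) w l)"
    proof cases
      case 1
      have "x \<in> kerset s n Q 1" using xC H 1 by (simp add: kerset_def)
      then obtain c where c: "x = tscale c (E n \<tau>)" using ker1(1) by auto
      have "dmap s n (cof Q) 1 x = tscale c g" unfolding c g_def by (rule Lx1.scale)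
      then have cg: "tscale c g \<in> im1" using H 1 im1_def by simp
      have "c = 0"
      proof (rule ccontr)
        assume "c \<noteq> 0"
        then have g1: "g = tscale (inverse c) (tscale c g)" by (simp add: TV.scale_scale)
        have g2: "tscale (inverse c) (tscale c g) \<in> im1" by (rule TV.subspace_scale[OF sub_im1 cg])
        from g2 have "g \<in> im1" by (simp only: g1[symmetric])
        then show False using g_notin by simp
      qed
      then have x0: "x = 0" using c by simp
      show ?thesis by (rule suff[of 0 0]) (simp_all add: zero_Cterm dmap_0 x0)
    next
      case 2
      have "x \<in> kerset s n Q 2" using xC H 2 by (simp add: kerset_def)
      then have "x \<in> tspan (insert g im1)" using T_sub by blast
      then obtain c where "x - tscale c g \<in> tspan im1" using TV.span_insert by blast
      then have "x - tscale c g \<in> im1" unfolding span_im1 .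
      then obtain w where w: "w \<in> Cterm n 1" "x - tscale c g = dmap s n Q 1 w"
        unfolding im1_def by blast
      have yC: "tscale c (E n \<tau>) \<in> Cterm n 1" by (simp add: Cterm1 E_scale)
      have yk: "dmap s n Q 1 (tscale c (E n \<tau>)) = 0" using ker1(1) by (auto simp: kerset_def)
      have "dmap s n (cof Q) 1 (tscale c (E n \<tau>)) = tscale c g" unfolding g_def by (rule Lx1.scale)
      then have xe: "x = dmap s n (cof Q) 1 (tscale c (E n \<tau>)) + dmap s n Q 1 w" using w(2) by (simp add: algebra_simps)
      have i1: "i - 1 = 1" using 2 by simp
      show ?thesis using suff[of "tscale c (E n \<tau>)" w] yC w(1) yk xe unfolding i1 by blast
    next
      case 3
      show ?thesis
      proof (cases "2 \<le> n")
        case True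
        then have "x \<in> dmap s n Q 2 ` Cterm n 2" using im2[OF True Q] xC 3 by simp
        then obtain w where w: "w \<in> Cterm n 2" "x = dmap s n Q 2 w" by auto
        show ?thesis using 3 by (intro suff[of 0 w]) (simp_all add: zero_Cterm dmap_0 w)
      next
        case False
        then have "Cterm n 3 = {0}" by (intro Cterm_other) auto
        then have x0: "x = 0" using xC 3 by simp
        show ?thesis by (rule suff[of 0 0]) (simp_all add: zero_Cterm dmap_0 x0)
      qed
    next
      case 4
      then have "Cterm n i = {0}" using Cterm_other[of i n] by blast
      then have x0: "x = 0" using xC by simp
      show ?thesis by (rule suff[of 0 0]) (simp_all add: zero_Cterm dmap_0 x0)
    qed
  qed
qed

lemma regular:
  assumes n: "1 \<le> n" and d: "det Q = 0" and Q: "Q \<noteq> 0"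
  shows "regular_homology_point s n Q"
  unfolding regular_homology_point_def
proof (intro conjI)
  show "det Q = 0" by (rule d)
  show "smooth_point Q" unfolding smooth_point_def using d Qdot_cof[OF Q] by blast
  show "\<exists>\<xi>. Qdot_nonzero Q \<xi> \<and> induced_exact s n Q \<xi>" using Qdot_cof[OF Q] induced[OF n d Q] by blast
  define P where "P = {(\<lambda>k::mat2. k$i$j) | i j. True}"
  define U where "U = - {k. \<forall>p\<in>P. p k = 0}"
  have P: "P \<subseteq> polyfun" by (auto simp: P_def intro: pf_coord)
  have U: "k \<in> U \<longleftrightarrow> k \<noteq> 0" for k
  proof -
    have "k \<notin> U \<longleftrightarrow> (\<forall>i j. k$i$j = 0)" by (auto simp: U_def P_def)
    also have "\<dots> \<longleftrightarrow> k = 0" by (auto simp: vec_eq_iff)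
    finally show ?thesis by blast
  qed
  show "\<exists>U. zariski_open U \<and> Q \<in> U \<and> (\<forall>k\<in>U. det k = 0 \<longrightarrow> (\<forall>i. hdim s n k i = hdim s n Q i))"
  proof (intro exI conjI ballI impI allI)
    show "zariski_open U" unfolding zariski_open_def U_def using P by blast
    show "Q \<in> U" using U Q by simp
    fix k i assume "k \<in> U" "det k = 0"
    then show "hdim s n k i = hdim s n Q i" using homology_rank1[OF n] U d Q by simp
  qed
qed

theorem mainTheorem7:
  fixes n :: nat and s :: bool
  assumes "n \<ge> 1"
  shows "(\<forall>k::mat2. det k \<noteq> 0 \<longrightarrow> (\<forall>i. hdim s n k i = 0)) \<and>
         (\<forall>q::mat2. det q = 0 \<and> q \<noteq> 0 \<longrightarrow>
            hdim s n q 1 = 1 \<and> hdim s n q 2 = 1 \<and>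
            (\<forall>i. i \<noteq> 1 \<and> i \<noteq> 2 \<longrightarrow> hdim s n q i = 0) \<and>
            regular_homology_point s n q)"
  using homology_det[OF assms] homology_rank1[OF assms] regular[OF assms] by auto

end
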